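(* Let $(S,\alpha)$ be a twisted K3 surface with $d=\mathrm{ord}(\alpha)$, and let $B\in\frac1d H^2(S,\mathbb Z)$ be a B-field lift of $\alpha$. Let $\kappa:\widetilde{NS}(S)\to H^0(S,\mathbb Q)\oplus NS(S)\oplus H^4(S,\mathbb Q)$ be $\kappa(a,l,b)=(da,l,\tfrac1d b)$. Then $e^B\circ\kappa$ is an orientation-preserving isometry $$e^B\circ\kappa:\widetilde{NS}(S)\xrightarrow{\sim}\big\langle \widetilde{NS}(S,B),\,(0,0,-\tfrac1d)\big\rangle .$$
   Context: $S$ is a complex projective K3 surface with $NS(S)$, holomorphic 2-form class $\omega_S$. Mukai lattice $\widetilde H(S,\mathbb Z)=H^0\oplus H^2\oplus H^4$ with elements $(a,l,b)$ and pairing $((a,l,b),(a',l',b'))=(l,l')-ab'-a'b$, extended $\mathbb Q$-bilinearly; $\widetilde{NS}(S)=H^0\oplus NS(S)\oplus H^4$. For $B\in H^2(S,\mathbb Q)$, $e^B(a,l,b)=(a,l+aB,b+(B,l)+\frac a2(B,B))$. A B-field lift of $\alpha\in\mathrm{Br}(S)\cong H^2(S,\mathbb Q)/(NS(S)_{\mathbb Q}+H^2(S,\mathbb Z))$ is a preimage $B$. $\widetilde{NS}(S,B)=e^B(\omega_S)^\perp\cap\widetilde H(S,\mathbb Z)$ where $e^B(\omega_S)=(0,\omega_S,(B,\omega_S))$; $\langle \widetilde{NS}(S,B),(0,0,-\frac1d)\rangle$ denotes the lattice generated by these in $\widetilde H(S,\mathbb Q)$. Orientations: for any $B'$ (including $B'=0$),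 the signature-$(2,\rho(S))$ lattice $\widetilde{NS}(S,B')$ and any lattice in $\widetilde{NS}(S,B')_{\mathbb Q}$ is oriented by declaring the positive 2-plane with ordered basis $e^{B'}(1,0,-1),e^{B'}(0,h,0)$, $h$ ample, positively oriented. *)

theory Defs
  imports "HOL-Analysis.Analysis"
begin

text \<open>H^2(S,Z) is modelled by the integral vectors of real^'n (coordinates in a Z-basis),
  with intersection form given by the Gram matrix Q.  The class omega_S = x + i y
  is given by its real and imaginary parts.\<close>

definition bil :: "real^'n^'n \<Rightarrow> real^'n \<Rightarrow> real^'n \<Rightarrow> real" where
  "bil Q u v = u \<bullet> (Q *v v)"

definition integral_vec :: "real^'n \<Rightarrow> bool" where
  "integral_vec v \<longleftrightarrow> (\<forall>i. v $ i \<in> \<int>)"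

definition rational_vec :: "real^'n \<Rightarrow> bool" where
  "rational_vec v \<longleftrightarrow> (\<forall>i. v $ i \<in> \<rat>)"

definition K3_lattice_form :: "real^'n^'n \<Rightarrow> bool" where
  "K3_lattice_form Q \<longleftrightarrow>
     CARD('n) = 22 \<and>
     (\<forall>i j. Q $ i $ j \<in> \<int>) \<and> transpose Q = Q \<and>
     (\<forall>i. \<exists>k\<in>\<int>. Q $ i $ i = 2 * k) \<and> \<bar>det Q\<bar> = 1 \<and>
     (\<exists>(P::real^'n^'n) Pos. invertible P \<and> card Pos = 3 \<and>
        transpose P ** Q ** P = (\<chi> i j. if i = j then (if i \<in> Pos then 1 else -1) else 0))"

text \<open>omega = x + i y is a period: (omega,omega) = 0 and (omega, conj omega) > 0.\<close>
definition K3_period :: "real^'n^'n \<Rightarrow> real^'n \<Rightarrow> real^'n \<Rightarrow> bool" where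
  "K3_period Q x y \<longleftrightarrow> bil Q x x = bil Q y y \<and> bil Q x y = 0 \<and> bil Q x x > 0"

definition NS :: "real^'n^'n \<Rightarrow> real^'n \<Rightarrow> real^'n \<Rightarrow> (real^'n) set" where
  "NS Q x y = {l. integral_vec l \<and> bil Q l x = 0 \<and> bil Q l y = 0}"

definition NSQ :: "real^'n^'n \<Rightarrow> real^'n \<Rightarrow> real^'n \<Rightarrow> (real^'n) set" where
  "NSQ Q x y = {(1 / real n) *\<^sub>R l | n l. n > 0 \<and> l \<in> NS Q x y}"

text \<open>Order of the Brauer class alpha = [B] in H^2(S,Q)/(NS(S)_Q + H^2(S,Z)).\<close>
definition brauer_ord :: "real^'n^'n \<Rightarrow> real^'n \<Rightarrow> real^'n \<Rightarrow> real^'n \<Rightarrow> nat" where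
  "brauer_ord Q x y B =
     (LEAST n::nat. n > 0 \<and> real n *\<^sub>R B \<in> {u + v | u v. u \<in> NSQ Q x y \<and> integral_vec v})"

type_synonym 'n mukai = "real \<times> (real^'n) \<times> real"

definition mukai_pair :: "real^'n^'n \<Rightarrow> 'n mukai \<Rightarrow> 'n mukai \<Rightarrow> real" where
  "mukai_pair Q v w =
     (case v of (a, l, b) \<Rightarrow> case w of (a', l', b') \<Rightarrow> bil Q l l' - a * b' - a' * b)"

definition eB :: "real^'n^'n \<Rightarrow> real^'n \<Rightarrow> 'n mukai \<Rightarrow> 'n mukai" where
  "eB Q B v = (case v of (a, l, b) \<Rightarrow> (a, l + a *\<^sub>R B, b + bil Q B l + a / 2 * bil Q B B))"

definition kappa :: "nat \<Rightarrow> 'n mukai \<Rightarrow> 'n mukai" where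
  "kappa d v = (case v of (a, l, b) \<Rightarrow> (real d * a, l, b / real d))"

definition mukai_Z :: "(('n::finite) mukai) set" where
  "mukai_Z = {(a, l, b). a \<in> \<int> \<and> integral_vec l \<and> b \<in> \<int>}"

definition NS_tilde :: "real^'n^'n \<Rightarrow> real^'n \<Rightarrow> real^'n \<Rightarrow> ('n mukai) set" where
  "NS_tilde Q x y = {(a, l, b). a \<in> \<int> \<and> l \<in> NS Q x y \<and> b \<in> \<int>}"

text \<open>\<open>NS~(S,B) = e^B(omega)^perp \<inter> H~(S,Z)\<close>, perpendicularity to the complex vector
  e^B(omega) = e^B(0,x,0) + i e^B(0,y,0) for the complex-bilinear extension.\<close>
definition NS_tilde_B :: "real^'n^'n \<Rightarrow> real^'n \<Rightarrow> real^'n \<Rightarrow> real^'n \<Rightarrow> ('n mukai) set" where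
  "NS_tilde_B Q x y B = {v \<in> mukai_Z. mukai_pair Q v (eB Q B (0, x, 0)) = 0
                                       \<and> mukai_pair Q v (eB Q B (0, y, 0)) = 0}"

inductive_set lattice_gen :: "'a::ab_group_add set \<Rightarrow> 'a set" for A where
  zero: "0 \<in> lattice_gen A"
| gen: "a \<in> A \<Longrightarrow> a \<in> lattice_gen A"
| diff: "u \<in> lattice_gen A \<Longrightarrow> v \<in> lattice_gen A \<Longrightarrow> u - v \<in> lattice_gen A"

text \<open>Oriented positive 2-plane basis e^{B'}(1,0,-1), e^{B'}(0,h,0).\<close>
definition or_basis :: "real^'n^'n \<Rightarrow> real^'n \<Rightarrow> real^'n \<Rightarrow> 'n mukai \<times> 'n mukai" where
  "or_basis Q B' h = (eB Q B' (1, 0, -1), eB Q B' (0, h, 0))"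

text \<open>A map phi from a lattice oriented via B0 to a lattice oriented via B1 (both inside
  H~(S,Q), with the same ample h) preserves orientation iff the orthogonal projection of
  the image of the positive oriented basis (p1,p2) onto the span of the positive oriented
  basis (q1,q2) has positive determinant in the basis (q1,q2); this determinant equals
  det[(phi p_i, q_j)] / det Gram(q1,q2).\<close>
definition orientation_preserving ::
  "real^'n^'n \<Rightarrow> real^'n \<Rightarrow> real^'n \<Rightarrow> real^'n \<Rightarrow> ('n mukai \<Rightarrow> 'n mukai) \<Rightarrow> bool" where
  "orientation_preserving Q h B0 B1 \<phi> \<longleftrightarrow>
     (let (p1, p2) = or_basis Q B0 h; (q1, q2) = or_basis Q B1 h;
          M = mukai_pair Q (\<phi> p1) q1 * mukai_pair Q (\<phi> p2) q2
              - mukai_pair Q (\<phi> p1) q2 * mukai_pair Q (\<phi> p2) q1;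
          G = mukai_pair Q q1 q1 * mukai_pair Q q2 q2 - mukai_pair Q q1 q2 * mukai_pair Q q2 q1
      in M / G > 0)"

end

theory Submission imports Defs begin

lemma bil_add_left: "bil Q (u + v) w = bil Q u w + bil Q v w"
  by (simp add: bil_def inner_add_left)
lemma bil_add_right: "bil Q w (u + v) = bil Q w u + bil Q w v"
  by (simp add: bil_def matrix_vector_right_distrib inner_add_right)
lemma bil_diff_left: "bil Q (u - v) w = bil Q u w - bil Q v w"
  by (simp add: bil_def inner_diff_left)
lemma bil_diff_right: "bil Q w (u - v) = bil Q w u - bil Q w v"
  by (simp add: bil_def matrix_vector_mult_diff_distrib inner_diff_right)
lemma bil_scale_left: "bil Q (c *\<^sub>R u) w = c * bil Q u w"
  by (simp add: bil_def)
lemma bil_scale_right: "bil Q w (c *\<^sub>R u) = c * bil Q w u"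
  by (simp add: bil_def matrix_vector_mult_scaleR)
lemma bil_neg_left: "bil Q (- u) w = - bil Q u w"
  by (simp add: bil_def)
lemma bil_neg_right: "bil Q w (- u) = - bil Q w u"
  using bil_scale_right[of Q w "-1" u] by simp
lemma bil_zero_left[simp]: "bil Q 0 w = 0" by (simp add: bil_def)
lemma bil_zero_right[simp]: "bil Q w 0 = 0" by (simp add: bil_def)
lemmas bil_lin = bil_add_left bil_add_right bil_diff_left bil_diff_right bil_scale_left
  bil_scale_right bil_neg_left bil_neg_right

lemma bil_sym: assumes "transpose Q = Q" shows "bil Q u v = bil Q v u"
proof -
  have "bil Q u v = (u v* Q) \<bullet> v" by (simp add: bil_def dot_lmul_matrix)
  also have "\<dots> = (transpose Q *v u) \<bullet> v" by simp
  also have "\<dots> = bil Q v u" using assms by (simp add: bil_def inner_commute)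
  finally show ?thesis .
qed

lemma bil_expand: "bil Q u v = (\<Sum>i\<in>UNIV. u $ i * (\<Sum>j\<in>UNIV. Q $ i $ j * v $ j))"
  by (simp add: bil_def inner_vec_def matrix_vector_mult_def)

lemma bil_int: assumes "\<forall>i j. Q $ i $ j \<in> \<int>" "integral_vec u" "integral_vec v"
  shows "bil Q u v \<in> \<int>"
  using assms unfolding bil_expand integral_vec_def
  by (intro Ints_sum Ints_mult) auto

lemma bil_axis: "bil Q (axis a 1) (axis a 1) = Q $ a $ a"
proof -
  have "bil Q (axis a 1) (axis a 1) = (\<Sum>i\<in>UNIV. (if i = a then 1 else 0) *
        (\<Sum>j\<in>UNIV. Q $ i $ j * (if j = a then 1 else 0)))"
    by (simp add: bil_expand axis_def)
  also have "\<dots> = Q $ a $ a"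
    by (simp add: if_distrib[of "\<lambda>x. _ * x"] sum.delta cong: if_cong) (simp add: if_distrib[of "\<lambda>x. x * _"] sum.delta cong: if_cong)
  finally show ?thesis .
qed

lemma bil_even:
  assumes Qi: "\<forall>i j. Q $ i $ j \<in> \<int>" and Qs: "transpose Q = Q"
    and Qe: "\<forall>i. \<exists>k\<in>\<int>. Q $ i $ i = 2 * k" and v: "integral_vec v"
  shows "\<exists>k\<in>\<int>. bil Q v v = 2 * k"
proof -
  define w where "w S = (\<chi> i. if i \<in> S then v $ i else 0)" for S
  have iw: "integral_vec (w S)" for S using v by (auto simp: integral_vec_def w_def)
  have "\<exists>k\<in>\<int>. bil Q (w S) (w S) = 2 * k" if "finite S" for S
    using that
  proof (induction S rule: finite_induct)
    case empty
    have "w {} = 0" by (simp add: w_def vec_eq_iff)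
    then show ?case by auto
  next
    case (insert a S)
    then obtain k where k: "k \<in> \<int>" "bil Q (w S) (w S) = 2 * k" by auto
    define t where "t = (v $ a) *\<^sub>R axis a (1::real)"
    have wi: "w (insert a S) = w S + t"
      using insert(2) by (auto simp: w_def t_def vec_eq_iff axis_def)
    obtain m where m: "m \<in> \<int>" "Q $ a $ a = 2 * m" using Qe by auto
    have it: "integral_vec t" using v by (auto simp: t_def integral_vec_def axis_def)
    have c: "bil Q (w S) t \<in> \<int>" by (rule bil_int[OF Qi iw it])
    have va: "v $ a \<in> \<int>" using v by (auto simp: integral_vec_def)
    have "bil Q (w (insert a S)) (w (insert a S)) = bil Q (w S) (w S) + 2 * bil Q (w S) t + bil Q t t"
      unfolding wi by (simp add: bil_lin bil_sym[OF Qs, of t "w S"])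
    also have "bil Q t t = (v $ a) * (v $ a) * Q $ a $ a"
      by (simp add: t_def bil_lin bil_axis)
    finally have "bil Q (w (insert a S)) (w (insert a S)) = 2 * (k + bil Q (w S) t + v $ a * v $ a * m)"
      using k m by (simp add: algebra_simps)
    moreover have "k + bil Q (w S) t + v $ a * v $ a * m \<in> \<int>" using k c m va by auto
    ultimately show ?case by blast
  qed
  moreover have "w UNIV = v" by (simp add: w_def vec_eq_iff)
  ultimately show ?thesis by fastforce
qed


lemma eB_iso: assumes "transpose Q = Q"
  shows "mukai_pair Q (eB Q B v) (eB Q B w) = mukai_pair Q v w"
proof -
  obtain a l b where v: "v = (a,l,b)" by (cases v) auto
  obtain a' l' b' where w: "w = (a',l',b')" by (cases w) auto
  show ?thesis unfolding v w mukai_pair_def eB_def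
    by (simp add: bil_lin bil_sym[OF assms, of l B] bil_sym[OF assms, of l' B] algebra_simps)
qed

lemma kappa_iso: assumes "d > 0"
  shows "mukai_pair Q (kappa d v) (kappa d w) = mukai_pair Q v w"
proof -
  obtain a l b where v: "v = (a,l,b)" by (cases v) auto
  obtain a' l' b' where w: "w = (a',l',b')" by (cases w) auto
  show ?thesis unfolding v w mukai_pair_def kappa_def using assms
    by (simp add: field_simps)
qed

lemma eB_comp: assumes "transpose Q = Q"
  shows "eB Q B (eB Q C v) = eB Q (B + C) v"
proof -
  obtain a l b where v: "v = (a,l,b)" by (cases v) auto
  show ?thesis unfolding v eB_def
    by (simp add: bil_lin bil_sym[OF assms, of C B] algebra_simps)
qed

lemma eB_zero[simp]: "eB Q 0 v = v"
  by (cases v) (simp add: eB_def)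

lemma eB_diff: "eB Q B (v - w) = eB Q B v - eB Q B w"
proof -
  obtain a l b where v: "v = (a,l,b)" by (cases v) auto
  obtain a' l' b' where w: "w = (a',l',b')" by (cases w) auto
  show ?thesis unfolding v w eB_def
    by (simp add: bil_lin algebra_simps diff_divide_distrib)
qed

lemma kappa_diff: "kappa d (v - w) = kappa d v - kappa d w"
  by (cases v, cases w) (simp add: kappa_def algebra_simps diff_divide_distrib)


lemma iv_add: "integral_vec u \<Longrightarrow> integral_vec v \<Longrightarrow> integral_vec (u + v)"
  by (auto simp: integral_vec_def)
lemma iv_diff: "integral_vec u \<Longrightarrow> integral_vec v \<Longrightarrow> integral_vec (u - v)"
  by (auto simp: integral_vec_def)
lemma iv_scale: "c \<in> \<int> \<Longrightarrow> integral_vec u \<Longrightarrow> integral_vec (c *\<^sub>R u)"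
  by (auto simp: integral_vec_def)
lemma iv_zero: "integral_vec 0"
  by (auto simp: integral_vec_def)

lemma lg_neg: fixes A :: "'a::ab_group_add set"
  shows "u \<in> lattice_gen A \<Longrightarrow> - u \<in> lattice_gen A"
  using lattice_gen.diff[of 0 A u] lattice_gen.zero[of A] by simp
lemma lg_add: fixes A :: "'a::ab_group_add set"
  shows "u \<in> lattice_gen A \<Longrightarrow> v \<in> lattice_gen A \<Longrightarrow> u + v \<in> lattice_gen A"
  using lattice_gen.diff[of u A "- v"] lg_neg[of v A] by simp

lemma lg_third:
  assumes "((0::real), (0::real^'n), c) \<in> lattice_gen A"
  shows "((0::real), (0::real^'n), of_int m * c) \<in> lattice_gen A"
proof (induction m rule: int_induct[where k=0])
  case base
  then show ?case using lattice_gen.zero[of A] by (simp add: zero_prod_def)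
next
  case (step1 i)
  have "((0::real), (0::real^'n), of_int (i+1) * c) = (0, 0, of_int i * c) + (0, 0, c)"
    by (simp add: algebra_simps)
  then show ?case using lg_add[OF step1(2) assms] by simp
next
  case (step2 i)
  have "((0::real), (0::real^'n), of_int (i-1) * c) = (0, 0, of_int i * c) - (0, 0, c)"
    by (simp add: algebra_simps)
  then show ?case using lattice_gen.diff[OF step2(2) assms] by simp
qed

lemma common_denom:
  assumes "rational_vec (B::real^'n)"
  shows "\<exists>N::nat. N > 0 \<and> integral_vec (real N *\<^sub>R B)"
proof -
  have "\<forall>i. \<exists>n::nat. n > 0 \<and> real n * B $ i \<in> \<int>"
  proof
    fix i
    have "B $ i \<in> \<rat>" using assms by (auto simp: rational_vec_def)
    then obtain a b :: int where ab: "b > 0" "B $ i = of_int a / of_int b"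
      by (elim Rats_cases') auto
    have "real (nat b) * B $ i = of_int a" using ab by simp
    then show "\<exists>n::nat. n > 0 \<and> real n * B $ i \<in> \<int>" using ab
      by (intro exI[of _ "nat b"]) auto
  qed
  then obtain f where f: "\<And>i. f i > 0 \<and> real (f i) * B $ i \<in> \<int>" by metis
  define N where "N = prod f UNIV"
  have "N > 0" using f by (simp add: N_def)
  moreover have "integral_vec (real N *\<^sub>R B)"
    unfolding integral_vec_def
  proof
    fix i
    have "real N = real (f i) * real (prod f (UNIV - {i}))"
      unfolding N_def by (simp add: prod.remove[of UNIV i f])
    then have e: "(real N *\<^sub>R B) $ i = real (prod f (UNIV - {i})) * (real (f i) * B $ i)"
      by simp
    show "(real N *\<^sub>R B) $ i \<in> \<int>" unfolding e using f[of i]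
      by (metis Ints_mult Ints_of_nat)
  qed
  ultimately show ?thesis by blast
qed


lemma ord_dvd:
  fixes Q :: "real^'n^'n" and x y B l :: "real^'n" and d :: nat and ai :: int
  assumes dpos: "d > 0" and dB: "integral_vec (real d *\<^sub>R B)"
    and min: "\<And>n. n > 0 \<Longrightarrow> real n *\<^sub>R B \<in> {u + v | u v. u \<in> NSQ Q x y \<and> integral_vec v} \<Longrightarrow> d \<le> n"
    and l: "integral_vec l"
    and px: "bil Q (l - of_int ai *\<^sub>R B) x = 0" and py: "bil Q (l - of_int ai *\<^sub>R B) y = 0"
  shows "int d dvd ai"
proof -
  define g where "g = gcd ai (int d)"
  have gpos: "g > 0" using dpos by (simp add: g_def)
  obtain u w where uw: "u * ai + w * int d = g" using bezout_int[of ai "int d"] g_def by auto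
  define r where "r = l - of_int ai *\<^sub>R B"
  have dr: "real d *\<^sub>R r = real d *\<^sub>R l - of_int ai *\<^sub>R (real d *\<^sub>R B)"
    by (simp add: r_def algebra_simps)
  have idr: "integral_vec (real d *\<^sub>R r)" unfolding dr
    using iv_diff[OF iv_scale[OF _ l] iv_scale[OF Ints_of_int dB]] by simp
  define l' where "l' = (- of_int u * real d) *\<^sub>R r"
  have l'NS: "l' \<in> NS Q x y"
  proof -
    have "l' = (- of_int u) *\<^sub>R (real d *\<^sub>R r)" by (simp add: l'_def)
    then have "integral_vec l'" using iv_scale[OF _ idr, of "- of_int u"] by simp
    moreover have "bil Q l' x = 0" "bil Q l' y = 0"
      using px py by (simp_all add: l'_def bil_lin r_def)
    ultimately show ?thesis by (simp add: NS_def)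
  qed
  have part1: "(1 / real d) *\<^sub>R l' \<in> NSQ Q x y"
    unfolding NSQ_def using l'NS dpos by blast
  have part2: "integral_vec (of_int u *\<^sub>R l + of_int w *\<^sub>R (real d *\<^sub>R B))"
    using iv_add[OF iv_scale[OF Ints_of_int l] iv_scale[OF Ints_of_int dB]] by simp
  have eq: "real (nat g) *\<^sub>R B = (1 / real d) *\<^sub>R l' + (of_int u *\<^sub>R l + of_int w *\<^sub>R (real d *\<^sub>R B))"
  proof -
    have "real (nat g) = of_int u * of_int ai + of_int w * real d"
      using uw gpos by (metis of_int_add of_int_mult of_int_of_nat_eq of_nat_nat less_imp_le)
    then show ?thesis using dpos by (simp add: l'_def r_def algebra_simps)
  qed
  have "d \<le> nat g"
    using min[of "nat g"] gpos part1 part2 eq by auto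
  moreover have "g \<le> int d" using dpos by (simp add: g_def)
  ultimately have "g = int d" using gpos by linarith
  then show ?thesis by (metis g_def gcd_dvd1)
qed


theorem proposition2p4:
  fixes Q :: "real^'n^'n" and x y h B :: "real^'n" and d :: nat
  assumes "K3_lattice_form Q"
    and "K3_period Q x y"
    and "h \<in> NS Q x y" and "bil Q h h > 0"
    and "rational_vec B"
    and "d = brauer_ord Q x y B"
    and "integral_vec (real d *\<^sub>R B)"
  shows "bij_betw (eB Q B \<circ> kappa d) (NS_tilde Q x y)
           (lattice_gen (NS_tilde_B Q x y B \<union> {(0, 0, - 1 / real d)}))
       \<and> (\<forall>u\<in>NS_tilde Q x y. \<forall>v\<in>NS_tilde Q x y.
            mukai_pair Q ((eB Q B \<circ> kappa d) u) ((eB Q B \<circ> kappa d) v) = mukai_pair Q u v)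
       \<and> orientation_preserving Q h 0 B (eB Q B \<circ> kappa d)"
proof -
  have Qi: "\<forall>i j. Q $ i $ j \<in> \<int>" and Qs: "transpose Q = Q"
    and Qe: "\<forall>i. \<exists>k\<in>\<int>. Q $ i $ i = 2 * k"
    using assms(1) by (auto simp: K3_lattice_form_def)
  define P where "P n \<longleftrightarrow> n > 0 \<and> real n *\<^sub>R B \<in> {u + v | u v. u \<in> NSQ Q x y \<and> integral_vec v}" for n
  have dLeast: "d = (LEAST n. P n)" using assms(6) by (simp add: brauer_ord_def P_def)
  obtain N where N: "N > 0" "integral_vec (real N *\<^sub>R B)" using common_denom[OF assms(5)] by auto
  have "(0::real^'n) \<in> NS Q x y" by (simp add: NS_def iv_zero)
  then have "(0::real^'n) \<in> NSQ Q x y" unfolding NSQ_def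
    by (intro CollectI exI[of _ "1::nat"] exI[of _ 0]) auto
  then have "P N" using N unfolding P_def
    by (intro conjI CollectI exI[of _ "0::real^'n"] exI[of _ "real N *\<^sub>R B"]) auto
  then have Pd: "P d" unfolding dLeast by (rule LeastI)
  have dpos: "d > 0" using Pd by (simp add: P_def)
  have min: "\<And>n. n > 0 \<Longrightarrow> real n *\<^sub>R B \<in> {u + v | u v. u \<in> NSQ Q x y \<and> integral_vec v} \<Longrightarrow> d \<le> n"
    unfolding dLeast by (rule Least_le) (simp add: P_def)
  have dB: "integral_vec (real d *\<^sub>R B)" by (rule assms(7))
  obtain m0 where m0: "m0 \<in> \<int>" "bil Q (real d *\<^sub>R B) (real d *\<^sub>R B) = 2 * m0"
    using bil_even[OF Qi Qs Qe dB] by auto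
  define \<phi> where "\<phi> = eB Q B \<circ> kappa d"
  define A where "A = NS_tilde Q x y"
  define L where "L = lattice_gen (NS_tilde_B Q x y B \<union> {(0, 0, - 1 / real d)})"
  have iso: "mukai_pair Q (\<phi> u) (\<phi> v) = mukai_pair Q u v" for u v
    by (simp add: \<phi>_def eB_iso[OF Qs] kappa_iso[OF dpos])
  have phi_diff: "\<phi> (u - v) = \<phi> u - \<phi> v" for u v
    by (simp add: \<phi>_def kappa_diff eB_diff)
  have gL: "((0::real), (0::real^'n), - 1 / real d) \<in> L"
    unfolding L_def by (rule lattice_gen.gen) simp
  have inj: "inj_on \<phi> A"
  proof (rule inj_onI)
    fix u v assume "\<phi> u = \<phi> v"
    then have "eB Q (- B) (eB Q B (kappa d u)) = eB Q (- B) (eB Q B (kappa d v))"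
      by (simp add: \<phi>_def)
    then have "kappa d u = kappa d v" by (simp add: eB_comp[OF Qs])
    then show "u = v" using dpos
      by (cases u, cases v) (simp add: kappa_def)
  qed
  have sub1: "\<phi> ` A \<subseteq> L"
  proof
    fix z assume "z \<in> \<phi> ` A"
    then obtain a l b where u: "(a, l, b) \<in> A" and z: "z = \<phi> (a, l, b)" by auto
    have a: "a \<in> \<int>" and b: "b \<in> \<int>" and lNS: "l \<in> NS Q x y"
      using u by (auto simp: A_def NS_tilde_def)
    have li: "integral_vec l" and lx: "bil Q l x = 0" and ly: "bil Q l y = 0"
      using lNS by (auto simp: NS_def)
    define t where "t = b / real d + bil Q B l + real d * a / 2 * bil Q B B"
    have zeq: "z = (real d * a, l + (real d * a) *\<^sub>R B, 0) - (0, 0, - t)"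
      by (simp add: z \<phi>_def kappa_def eB_def t_def)
    have "real d * t = b + bil Q (real d *\<^sub>R B) l + a * m0"
    proof -
      have "bil Q (real d *\<^sub>R B) (real d *\<^sub>R B) = real d * real d * bil Q B B"
        by (simp add: bil_lin)
      then show ?thesis using m0 dpos by (simp add: t_def bil_lin field_simps)
    qed
    moreover have "b + bil Q (real d *\<^sub>R B) l + a * m0 \<in> \<int>"
      using a b m0 bil_int[OF Qi dB li] by auto
    ultimately obtain m where m: "real d * t = of_int m" by (metis Ints_cases)
    have "(0::real, 0::real^'n, - t) = (0, 0, of_int m * (- 1 / real d))"
      using m dpos by (simp add: field_simps)
    then have zL: "(0::real, 0::real^'n, - t) \<in> L" using lg_third[OF gL[unfolded L_def], of m] unfolding L_def by simp
    have wB: "(real d * a, l + (real d * a) *\<^sub>R B, 0) \<in> NS_tilde_B Q x y B"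
    proof -
      have "l + (real d * a) *\<^sub>R B = l + a *\<^sub>R (real d *\<^sub>R B)" by simp
      then have "integral_vec (l + (real d * a) *\<^sub>R B)"
        using iv_add[OF li iv_scale[OF a dB]] by (simp add: mult.commute)
      moreover have "real d * a \<in> \<int>" using a by simp
      ultimately show ?thesis
        using lx ly by (simp add: NS_tilde_B_def mukai_Z_def mukai_pair_def eB_def bil_lin)
    qed
    then have w1: "(real d * a, l + (real d * a) *\<^sub>R B, 0) \<in> L"
      unfolding L_def by (intro lattice_gen.gen) simp
    show "z \<in> L" unfolding zeq L_def
      by (rule lattice_gen.diff[OF w1[unfolded L_def] zL[unfolded L_def]])
  qed
  have Adiff: "u - v \<in> A" if "u \<in> A" "v \<in> A" for u v
    using that by (cases u, cases v)
      (auto simp: A_def NS_tilde_def NS_def bil_lin intro!: iv_diff)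
  have sub2: "z \<in> \<phi> ` A" if "z \<in> L" for z
    using that unfolding L_def
  proof (induction z rule: lattice_gen.induct)
    case zero
    have "(0::'n mukai) \<in> A" by (simp add: A_def NS_tilde_def NS_def iv_zero zero_prod_def)
    moreover have "\<phi> 0 = 0" by (simp add: \<phi>_def kappa_def eB_def zero_prod_def)
    ultimately show ?case by (metis image_eqI)
  next
    case (diff u v)
    then obtain u' v' where "u' \<in> A" "v' \<in> A" "u = \<phi> u'" "v = \<phi> v'" by auto
    then show ?case using Adiff phi_diff by (metis image_eqI)
  next
    case (gen z)
    then show ?case
    proof
      assume "z \<in> {(0, 0, - 1 / real d)}"
      then have "z = \<phi> (0, 0, -1)" by (simp add: \<phi>_def kappa_def eB_def)
      moreover have "(0::real, 0::real^'n, -1::real) \<in> A"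
        by (simp add: A_def NS_tilde_def NS_def iv_zero)
      ultimately show ?thesis by auto
    next
      assume zB: "z \<in> NS_tilde_B Q x y B"
      obtain a l b where zz: "z = (a, l, b)" by (cases z) auto
      have a: "a \<in> \<int>" and b: "b \<in> \<int>" and li: "integral_vec l"
        and px: "bil Q l x - a * bil Q B x = 0" and py: "bil Q l y - a * bil Q B y = 0"
        using zB by (auto simp: zz NS_tilde_B_def mukai_Z_def mukai_pair_def eB_def)
      obtain ai where ai: "a = of_int ai" using a by (metis Ints_cases)
      have "int d dvd ai"
        by (rule ord_dvd[where Q=Q and x=x and y=y and B=B and l=l and ai=ai and d=d, OF dpos dB min li]) (use px py ai in \<open>simp_all add: bil_lin\<close>)
      then obtain k where k: "ai = int d * k" by (auto simp: dvd_def)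
      have ak: "a = real d * of_int k" using ai k by simp
      define w where "w = (of_int k :: real, l - a *\<^sub>R B,
                          real d * (b - bil Q B l + a / 2 * bil Q B B))"
      have wA: "w \<in> A"
      proof -
        have "l - a *\<^sub>R B = l - of_int k *\<^sub>R (real d *\<^sub>R B)" by (simp add: ak)
        then have i1: "integral_vec (l - a *\<^sub>R B)"
          using iv_diff[OF li iv_scale[OF Ints_of_int dB], of k] by (simp add: ak mult.commute)
        have "real d * (b - bil Q B l + a / 2 * bil Q B B)
              = real d * b - bil Q (real d *\<^sub>R B) l + of_int k * m0"
        proof -
          have "bil Q (real d *\<^sub>R B) (real d *\<^sub>R B) = real d * real d * bil Q B B"
            by (simp add: bil_lin)
          then show ?thesis using m0 ak by (simp add: bil_lin field_simps)
        qed
        moreover have "real d * b - bil Q (real d *\<^sub>R B) l + of_int k * m0 \<in> \<int>"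
          using b m0 bil_int[OF Qi dB li] by auto
        ultimately show ?thesis using i1 px py
          by (simp add: w_def A_def NS_tilde_def NS_def bil_lin)
      qed
      have "kappa d w = eB Q (- B) z"
        using dpos by (simp add: w_def kappa_def eB_def zz bil_lin ak)
      then have "\<phi> w = z" by (simp add: \<phi>_def eB_comp[OF Qs])
      then show ?thesis using wA by auto
    qed
  qed
  have bij: "bij_betw \<phi> A L"
    unfolding bij_betw_def using inj sub1 sub2 by auto
  have hpos: "bil Q h h > 0" by (rule assms(4))
  have op: "orientation_preserving Q h 0 B \<phi>"
  proof -
    have phiB: "mukai_pair Q (\<phi> p) (eB Q B q) = mukai_pair Q (kappa d p) q" for p q
      by (simp add: \<phi>_def eB_iso[OF Qs])
    have e1: "mukai_pair Q (\<phi> (1, 0, -1)) (eB Q B (1, 0, -1)) = real d + 1 / real d"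
      unfolding phiB using dpos by (simp add: kappa_def mukai_pair_def)
    have e2: "mukai_pair Q (\<phi> (0, h, 0)) (eB Q B (0, h, 0)) = bil Q h h"
      unfolding phiB by (simp add: kappa_def mukai_pair_def)
    have e3: "mukai_pair Q (\<phi> (1, 0, -1)) (eB Q B (0, h, 0)) = 0"
      unfolding phiB by (simp add: kappa_def mukai_pair_def)
    have e4: "mukai_pair Q (\<phi> (0, h, 0)) (eB Q B (1, 0, -1)) = 0"
      unfolding phiB by (simp add: kappa_def mukai_pair_def)
    have g1: "mukai_pair Q (eB Q B (1, 0, -1)) (eB Q B (1, 0, -1)) = 2"
      unfolding eB_iso[OF Qs] by (simp add: mukai_pair_def)
    have g2: "mukai_pair Q (eB Q B (0, h, 0)) (eB Q B (0, h, 0)) = bil Q h h"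
      unfolding eB_iso[OF Qs] by (simp add: mukai_pair_def)
    have g3: "mukai_pair Q (eB Q B (1, 0, -1)) (eB Q B (0, h, 0)) = 0"
      unfolding eB_iso[OF Qs] by (simp add: mukai_pair_def)
    have "(real d + 1 / real d) * bil Q h h / (2 * bil Q h h) > 0"
      using hpos dpos by (simp add: divide_pos_pos add_pos_pos)
    then show ?thesis
      unfolding orientation_preserving_def or_basis_def Let_def
      by (simp add: e1 e2 e3 e4 g1 g2 g3)
  qed
  show ?thesis
    using bij iso op unfolding \<phi>_def A_def L_def by auto
qed

end
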